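(* Let $L_0$ be shared between frames $\mathcal{F}_1,\mathcal{F}_2$. Let $\mathcal{B}_{lc}\in\mathrm{lruns}_{\mathrm{LEFT}_0\cup C_{cut,0}}(\mathcal{F}_1)$ and $\mathcal{B}_{rc}\in\mathrm{lruns}_{\mathrm{RIGHT}_2\cup C_{cut,0}}(\mathcal{F}_2)$ satisfy $\mathcal{B}_{lc}|_{C_{cut,0}}=\mathcal{B}_{rc}|_{C_{cut,0}}$. Then there is an $\mathcal{A}\in\mathrm{exec}(\mathcal{F}_2)$ such that $\mathcal{B}_{lc}=\mathcal{A}|_{\mathrm{LEFT}_0\cup C_{cut,0}}$ and $\mathcal{B}_{rc}=\mathcal{A}|_{\mathrm{RIGHT}_2\cup C_{cut,0}}$.
   Context: A frame consists of pairwise disjoint sets of locations $\mathcal{LO}$, channels $\mathcal{CH}$, data $\mathcal{D}$. Each channel $c$ either has both a sender $\mathrm{sender}(c)$ and a recipient $\mathrm{recipient}(c)$ (possibly equal), or neither; $\mathrm{chans}(\ell)$ is the set of channels of which $\ell$ is sender or recipient. Each location $\ell$ has a prefix-closed set $\mathrm{traces}(\ell)$ of finite or infinite sequences of labels $(c,v)$, $c\in\mathrm{chans}(\ell)$, $v\in\mathcal{D}$. Events are drawn from a common set $E$ with functions $\mathrm{chan}$ and $\mathrm{msg}$. A system of events $(B,\preceq)$ has $B\subseteq E$ and $\preceq$ a partial order with finitely many predecessors per event; it is an execution of frame $\mathcal{F}_i$ ($\in\mathrm{exec}(\mathcal{F}_i)$) iff for each location $\ell$ of $\mathcal{F}_i$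 the events whose channel has $\ell$ as sender or recipient are linearly ordered and, as a sequence of labels $(\mathrm{chan}(e),\mathrm{msg}(e))$, lie in $\mathrm{traces}(\ell)$. $\mathcal{B}|_C$ keeps events with channel in $C$ and the restricted order; $\mathrm{lruns}_C(\mathcal{F}_i)=\{\mathcal{A}|_C:\mathcal{A}\in\mathrm{exec}(\mathcal{F}_i)\}$. A set $L_0$ of locations is shared between $\mathcal{F}_1$ and $\mathcal{F}_2$ (with locations $\mathcal{LO}_i$, channels $\mathcal{CH}_i$) iff $L_0\subseteq\mathcal{LO}_1\cap\mathcal{LO}_2$ and each $\ell\in L_0$ has the same channel endpoints and the same trace set in both frames. Then $\mathrm{LEFT}_0=\{c\in\mathcal{CH}_1:$ both endpoints of $c$ are in $L_0\}$, $C_{cut,0}=\{c\in\mathcal{CH}_1:$ exactly one endpoint of $c$ is in $L_0\}$, and $\mathrm{RIGHT}_2=\{c\in\mathcal{CH}_2:$ no endpoint of $c$ is in $L_0\}$. *)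

theory Defs
  imports Main
begin

text \<open>A (finite or infinite) sequence over 'a is a partial map from nat whose
domain is an initial segment of nat (possibly all of nat).\<close>
type_synonym 'a seq = "nat \<Rightarrow> 'a option"

definition is_seq :: "'a seq \<Rightarrow> bool" where
  "is_seq s \<longleftrightarrow> (\<forall>n m. m \<le> n \<longrightarrow> s n \<noteq> None \<longrightarrow> s m \<noteq> None)"

text \<open>The prefix of length k (every prefix of s is either s itself or such a truncation).\<close>
definition truncate :: "'a seq \<Rightarrow> nat \<Rightarrow> 'a seq" where
  "truncate s k = (\<lambda>n. if n < k then s n else None)"

definition prefix_closed :: "'a seq set \<Rightarrow> bool" where
  "prefix_closed S \<longleftrightarrow> (\<forall>s\<in>S. \<forall>k. truncate s k \<in> S)"

text \<open>Locations, channels and data live in distinct types, hence are pairwise disjoint.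
A channel has either both a sender and a recipient, or neither.\<close>
record ('l, 'c, 'd) frame =
  LO :: "'l set"
  CH :: "'c set"
  Dat :: "'d set"
  sender :: "'c \<Rightarrow> 'l option"
  recipient :: "'c \<Rightarrow> 'l option"
  traces :: "'l \<Rightarrow> ('c \<times> 'd) seq set"

definition chans :: "('l, 'c, 'd) frame \<Rightarrow> 'l \<Rightarrow> 'c set" where
  "chans F l = {c \<in> CH F. sender F c = Some l \<or> recipient F c = Some l}"

definition frame :: "('l, 'c, 'd) frame \<Rightarrow> bool" where
  "frame F \<longleftrightarrow>
     (\<forall>c. c \<notin> CH F \<longrightarrow> sender F c = None \<and> recipient F c = None) \<and>
     (\<forall>c\<in>CH F. (sender F c = None) \<longleftrightarrow> (recipient F c = None)) \<and>
     (\<forall>c\<in>CH F. \<forall>l. sender F c = Some l \<longrightarrow> l \<in> LO F) \<and>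
     (\<forall>c\<in>CH F. \<forall>l. recipient F c = Some l \<longrightarrow> l \<in> LO F) \<and>
     (\<forall>l\<in>LO F. prefix_closed (traces F l) \<and>
        (\<forall>s\<in>traces F l. is_seq s \<and>
           (\<forall>n c v. s n = Some (c, v) \<longrightarrow> c \<in> chans F l \<and> v \<in> Dat F)))"

text \<open>Events are elements of a type 'e with functions chan and msg.
A system of events is a pair (B, R), R a partial order on B with finitely many
predecessors per event.\<close>
type_synonym 'e sysev = "'e set \<times> ('e \<times> 'e) set"

definition sys_events :: "'e sysev \<Rightarrow> bool" where
  "sys_events BR \<longleftrightarrow> (case BR of (B, R) \<Rightarrow>
     partial_order_on B R \<and> (\<forall>e\<in>B. finite {e'. (e', e) \<in> R}))"

definition loc_events :: "('e \<Rightarrow> 'c) \<Rightarrow> ('l, 'c, 'd) frame \<Rightarrow> 'e set \<Rightarrow> 'l \<Rightarrow> 'e set" where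
  "loc_events chan F B l = {e \<in> B. chan e \<in> chans F l}"

definition enumerates :: "('e \<Rightarrow> 'c) \<Rightarrow> ('e \<Rightarrow> 'd) \<Rightarrow> 'e set \<Rightarrow> ('e \<times> 'e) set
    \<Rightarrow> ('c \<times> 'd) seq \<Rightarrow> bool" where
  "enumerates chan msg Eb R s \<longleftrightarrow>
     (\<exists>f :: nat \<Rightarrow> 'e. bij_betw f {n. s n \<noteq> None} Eb \<and>
        (\<forall>n m. s n \<noteq> None \<longrightarrow> s m \<noteq> None \<longrightarrow> (n \<le> m \<longleftrightarrow> (f n, f m) \<in> R)) \<and>
        (\<forall>n. s n \<noteq> None \<longrightarrow> s n = Some (chan (f n), msg (f n))))"

definition exec :: "('e \<Rightarrow> 'c) \<Rightarrow> ('e \<Rightarrow> 'd) \<Rightarrow> ('l, 'c, 'd) frame \<Rightarrow> 'e sysev set" where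
  "exec chan msg F = {(B, R). sys_events (B, R) \<and>
     (\<forall>l\<in>LO F. total_on (loc_events chan F B l) R \<and>
        (\<exists>s\<in>traces F l. enumerates chan msg (loc_events chan F B l) R s))}"

definition restr :: "('e \<Rightarrow> 'c) \<Rightarrow> 'e sysev \<Rightarrow> 'c set \<Rightarrow> 'e sysev" where
  "restr chan BR C = (case BR of (B, R) \<Rightarrow>
     ({e \<in> B. chan e \<in> C}, R \<inter> ({e \<in> B. chan e \<in> C} \<times> {e \<in> B. chan e \<in> C})))"

definition lruns :: "('e \<Rightarrow> 'c) \<Rightarrow> ('e \<Rightarrow> 'd) \<Rightarrow> 'c set \<Rightarrow> ('l, 'c, 'd) frame \<Rightarrow> 'e sysev set" where
  "lruns chan msg C F = {restr chan A C | A. A \<in> exec chan msg F}"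

definition shared :: "'l set \<Rightarrow> ('l, 'c, 'd) frame \<Rightarrow> ('l, 'c, 'd) frame \<Rightarrow> bool" where
  "shared L0 F1 F2 \<longleftrightarrow> L0 \<subseteq> LO F1 \<inter> LO F2 \<and>
     (\<forall>l\<in>L0. chans F1 l = chans F2 l \<and>
        (\<forall>c\<in>chans F1 l. sender F1 c = sender F2 c \<and> recipient F1 c = recipient F2 c) \<and>
        traces F1 l = traces F2 l)"

definition in_L :: "'l set \<Rightarrow> 'l option \<Rightarrow> bool" where
  "in_L L x \<longleftrightarrow> (\<exists>l\<in>L. x = Some l)"

definition LEFT0 :: "'l set \<Rightarrow> ('l, 'c, 'd) frame \<Rightarrow> 'c set" where
  "LEFT0 L0 F1 = {c \<in> CH F1. in_L L0 (sender F1 c) \<and> in_L L0 (recipient F1 c)}"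

definition Ccut0 :: "'l set \<Rightarrow> ('l, 'c, 'd) frame \<Rightarrow> 'c set" where
  "Ccut0 L0 F1 = {c \<in> CH F1. sender F1 c \<noteq> None \<and> recipient F1 c \<noteq> None \<and>
                    (in_L L0 (sender F1 c) \<noteq> in_L L0 (recipient F1 c))}"

definition RIGHT2 :: "'l set \<Rightarrow> ('l, 'c, 'd) frame \<Rightarrow> 'c set" where
  "RIGHT2 L0 F2 = {c \<in> CH F2. \<not> in_L L0 (sender F2 c) \<and> \<not> in_L L0 (recipient F2 c)}"

end

theory Submission
  imports Defs
begin

lemma combine:
  fixes B1 B2 :: "'e set" and R1 R2
  assumes po1: "partial_order_on B1 R1" and po2: "partial_order_on B2 R2"
    and fin1: "\<And>x. finite {y. (y,x)\<in>R1}" and fin2: "\<And>x. finite {y. (y,x)\<in>R2}"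
    and K12: "\<And>x y. x\<in>B1 \<Longrightarrow> y \<in> B1 \<Longrightarrow> (x,y)\<in>R2 \<Longrightarrow> (x,y)\<in>R1"
    and K21: "\<And>x y. x\<in>B2 \<Longrightarrow> y \<in> B2 \<Longrightarrow> (x,y)\<in>R1 \<Longrightarrow> (x,y)\<in>R2"
    and R: "R = R1 \<union> R2 \<union> R1 O R2 \<union> R2 O R1"
  shows "sys_events (B1\<union>B2, R)" "R \<inter> (B1\<times>B1) = R1" "R \<inter> (B2\<times>B2) = R2"
proof -
  have s1: "R1 \<subseteq> B1\<times>B1" and t1: "trans R1" and a1: "antisym R1" and r1: "refl_on B1 R1"
    using partial_order_onD[OF po1] by auto
  have s2: "R2 \<subseteq> B2\<times>B2" and t2: "trans R2" and a2: "antisym R2" and r2: "refl_on B2 R2"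
    using partial_order_onD[OF po2] by auto
  note tr1 = transD[OF t1] and tr2 = transD[OF t2]
  show res1: "R \<inter> (B1\<times>B1) = R1"
    unfolding R using s1 s2 K12 tr1 by blast
  show res2: "R \<inter> (B2\<times>B2) = R2"
    unfolding R using s1 s2 K21 tr2 by blast
  have sub: "R \<subseteq> (B1\<union>B2)\<times>(B1\<union>B2)" unfolding R using s1 s2 by blast
  have refl: "refl_on (B1\<union>B2) R" using r1 r2 unfolding R refl_on_def by blast
  have k1: "(a,d)\<in>R1" if "(a,b)\<in>R1" "(b,c)\<in>R2" "(c,d)\<in>R1" for a b c d
  proof -
    have "b \<in> B1" "c \<in> B1" using that s1 by auto
    then have "(b,c) \<in> R1" using K12 that by blast
    then show ?thesis using tr1 that by blast
  qed
  have k2: "(a,d)\<in>R2" if "(a,b)\<in>R2" "(b,c)\<in>R1" "(c,d)\<in>R2" for a b c d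
  proof -
    have "b \<in> B2" "c \<in> B2" using that s2 by auto
    then have "(b,c) \<in> R2" using K21 that by blast
    then show ?thesis using tr2 that by blast
  qed
  have p1: "a \<in> B1" and q1: "b \<in> B1" if "(a,b)\<in>R1" for a b using s1 that by auto
  have p2: "a \<in> B2" and q2: "b \<in> B2" if "(a,b)\<in>R2" for a b using s2 that by auto
  have memR: "(x,z)\<in>R \<longleftrightarrow> (x,z)\<in>R1 \<or> (x,z)\<in>R2 \<or> (\<exists>b. (x,b)\<in>R1 \<and> (b,z)\<in>R2) \<or> (\<exists>b. (x,b)\<in>R2 \<and> (b,z)\<in>R1)" for x z
    unfolding R by blast
  have trans: "trans R"
  proof (rule transI)
    fix x y z assume xy: "(x,y) \<in> R" and yz: "(y,z)\<in>R"
    show "(x,z) \<in> R"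
      using xy yz unfolding memR
      apply (elim disjE exE conjE)
      by (meson tr1 tr2 k1 k2)+
  qed
  have anti: "antisym R"
  proof (rule antisymI)
    fix x y assume xy: "(x,y) \<in> R" and yx: "(y,x)\<in>R"
    have xx: "x = y" if "(x,y)\<in>R1" "(y,x)\<in>R1" for x y using antisymD[OF a1] that by blast
    have yy: "x = y" if "(x,y)\<in>R2" "(y,x)\<in>R2" for x y using antisymD[OF a2] that by blast
    have mem: "x \<in> B1 \<union> B2" "y \<in> B1 \<union> B2" using xy sub by auto
    have gen: "x = y" if H: "x \<in> B1" "x \<notin> B2" "y \<in> B2" "y \<notin> B1" "(x,y)\<in>R" "(y,x)\<in>R" for x y
    proof -
      obtain b where b: "(x,b)\<in>R1" "(b,y)\<in>R2" using H unfolding memR by (metis p1 p2 q1 q2)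
      obtain b' where b': "(y,b')\<in>R2" "(b',x)\<in>R1" using H unfolding memR by (metis p1 p2 q1 q2)
      have "(b,b')\<in>R2" using b b' tr2 by blast
      then have "(b,b')\<in>R1" using K12 p1 q1 b b' by blast
      then have "(b,x)\<in>R1" using b' tr1 by blast
      then have "b = x" using xx b by blast
      then show ?thesis using b p2 H by blast
    qed
    show "x = y"
    proof (cases "x \<in> B1 \<and> y \<in> B1")
      case True then show ?thesis using res1 xy yx xx by blast
    next
      case F1: False
      show ?thesis
      proof (cases "x \<in> B2 \<and> y \<in> B2")
        case True then show ?thesis using res2 xy yx yy by blast
      next
        case False
        then show ?thesis using F1 mem gen[of x y] gen[of y x] xy yx by blast
      qed
    qed
  qed
  have fin: "\<forall>e\<in>B1\<union>B2. finite {e'. (e', e) \<in> R}"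
  proof
    fix e
    have "{e'. (e', e) \<in> R} \<subseteq> {y. (y,e)\<in>R1} \<union> {y. (y,e)\<in>R2}
       \<union> (\<Union>b\<in>{y. (y,e)\<in>R2}. {y. (y,b)\<in>R1}) \<union> (\<Union>b\<in>{y. (y,e)\<in>R1}. {y. (y,b)\<in>R2})"
      unfolding R by blast
    moreover have "finite ({y. (y,e)\<in>R1} \<union> {y. (y,e)\<in>R2}
       \<union> (\<Union>b\<in>{y. (y,e)\<in>R2}. {y. (y,b)\<in>R1}) \<union> (\<Union>b\<in>{y. (y,e)\<in>R1}. {y. (y,b)\<in>R2}))"
      using fin1 fin2 by auto
    ultimately show "finite {e'. (e', e) \<in> R}" by (rule finite_subset)
  qed
  show "sys_events (B1\<union>B2, R)"
    unfolding sys_events_def partial_order_on_def preorder_on_def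
    using sub refl trans anti fin by auto
qed


lemma po_restr:
  assumes "partial_order_on B R" "B0 \<subseteq> B"
  shows "partial_order_on B0 (R \<inter> B0\<times>B0)"
  using assms unfolding partial_order_on_def preorder_on_def refl_on_def trans_def antisym_def
  by blast

lemma enum_cong:
  assumes "R \<inter> E\<times>E = R' \<inter> E\<times>E" "enumerates chan msg E R s"
  shows "enumerates chan msg E R' s"
proof -
  obtain f where f: "bij_betw f {n. s n \<noteq> None} E"
    "\<forall>n m. s n \<noteq> None \<longrightarrow> s m \<noteq> None \<longrightarrow> (n \<le> m \<longleftrightarrow> (f n, f m) \<in> R)"
    "\<forall>n. s n \<noteq> None \<longrightarrow> s n = Some (chan (f n), msg (f n))"
    using assms(2) unfolding enumerates_def by blast
  have inE: "f n \<in> E" if "s n \<noteq> None" for n using f(1) that bij_betwE by blast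
  have "\<forall>n m. s n \<noteq> None \<longrightarrow> s m \<noteq> None \<longrightarrow> (n \<le> m \<longleftrightarrow> (f n, f m) \<in> R')"
  proof (intro allI impI)
    fix n m assume "s n \<noteq> None" "s m \<noteq> None"
    then have "(f n, f m) \<in> R \<longleftrightarrow> (f n, f m) \<in> R'" using inE assms(1) by blast
    then show "(n \<le> m \<longleftrightarrow> (f n, f m) \<in> R')" using f(2) \<open>s n \<noteq> None\<close> \<open>s m \<noteq> None\<close> by blast
  qed
  then show ?thesis unfolding enumerates_def using f(1,3) by blast
qed

lemma total_cong:
  assumes "R \<inter> E\<times>E = R' \<inter> E\<times>E" "total_on E R"
  shows "total_on E R'"
  using assms unfolding total_on_def by blast

lemma in_L_simps[simp]: "in_L L (Some l) \<longleftrightarrow> l \<in> L" "\<not> in_L L None"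
  unfolding in_L_def by auto

theorem lemma11:
  fixes F1 F2 :: "('l, 'c, 'd) frame"
    and chan :: "'e \<Rightarrow> 'c" and msg :: "'e \<Rightarrow> 'd"
    and L0 :: "'l set" and Blc Brc :: "'e sysev"
  assumes "frame F1" and "frame F2"
    and "shared L0 F1 F2"
    and "Blc \<in> lruns chan msg (LEFT0 L0 F1 \<union> Ccut0 L0 F1) F1"
    and "Brc \<in> lruns chan msg (RIGHT2 L0 F2 \<union> Ccut0 L0 F1) F2"
    and "restr chan Blc (Ccut0 L0 F1) = restr chan Brc (Ccut0 L0 F1)"
  shows "\<exists>A \<in> exec chan msg F2.
           Blc = restr chan A (LEFT0 L0 F1 \<union> Ccut0 L0 F1) \<and>
           Brc = restr chan A (RIGHT2 L0 F2 \<union> Ccut0 L0 F1)"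
proof -
  define LC where "LC = LEFT0 L0 F1 \<union> Ccut0 L0 F1"
  define RC where "RC = RIGHT2 L0 F2 \<union> Ccut0 L0 F1"
  define Cut where "Cut = Ccut0 L0 F1"
  have sh: "L0 \<subseteq> LO F1 \<inter> LO F2"
    "\<And>l. l\<in>L0 \<Longrightarrow> chans F1 l = chans F2 l"
    "\<And>l c. l\<in>L0 \<Longrightarrow> c \<in> chans F1 l \<Longrightarrow> sender F1 c = sender F2 c \<and> recipient F1 c = recipient F2 c"
    "\<And>l. l\<in>L0 \<Longrightarrow> traces F1 l = traces F2 l"
    using assms(3) unfolding shared_def by auto
  have fr1: "\<And>c. c\<in>CH F1 \<Longrightarrow> (sender F1 c = None) \<longleftrightarrow> (recipient F1 c = None)"
    using assms(1) unfolding frame_def by blast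
  have touch: "c \<notin> RIGHT2 L0 F2" if T: "c \<in> CH F1" "in_L L0 (sender F1 c) \<or> in_L L0 (recipient F1 c)" for c
  proof -
    obtain l where l: "l \<in> L0" "sender F1 c = Some l \<or> recipient F1 c = Some l"
      using T(2) unfolding in_L_def by blast
    then have "c \<in> chans F1 l" using T(1) unfolding chans_def by blast
    then have "sender F1 c = sender F2 c \<and> recipient F1 c = recipient F2 c" using sh(3) l by blast
    then show ?thesis using T(2) unfolding RIGHT2_def by auto
  qed
  have LCRC: "LC \<inter> RC \<subseteq> Cut"
    unfolding LC_def RC_def Cut_def using touch unfolding LEFT0_def by blast
  have CutLC: "Cut \<subseteq> LC" and CutRC: "Cut \<subseteq> RC" unfolding Cut_def LC_def RC_def by auto
  have CH1: "chans F1 l \<subseteq> LC" if "l \<in> L0" for l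
  proof
    fix c assume c: "c \<in> chans F1 l"
    then have cc: "c \<in> CH F1" "sender F1 c = Some l \<or> recipient F1 c = Some l" unfolding chans_def by auto
    then have "sender F1 c \<noteq> None" "recipient F1 c \<noteq> None" using fr1[OF cc(1)] cc(2) by auto
    then show "c \<in> LC" unfolding LC_def LEFT0_def Ccut0_def using cc that by auto
  qed
  have CH2: "chans F2 l \<subseteq> RC" if "l \<in> LO F2" "l \<notin> L0" for l
  proof
    fix c assume c: "c \<in> chans F2 l"
    then have cc: "c \<in> CH F2" "sender F2 c = Some l \<or> recipient F2 c = Some l" unfolding chans_def by auto
    show "c \<in> RC"
    proof (cases "c \<in> RIGHT2 L0 F2")
      case True then show ?thesis unfolding RC_def by auto
    next
      case False
      then obtain l' where l': "l' \<in> L0" "sender F2 c = Some l' \<or> recipient F2 c = Some l'"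
        using cc unfolding RIGHT2_def in_L_def by blast
      then have "c \<in> chans F2 l'" using cc unfolding chans_def by blast
      then have c1: "c \<in> chans F1 l'" using sh(2) l' by blast
      then have eq: "sender F1 c = sender F2 c \<and> recipient F1 c = recipient F2 c" using sh(3) l' by blast
      have "l \<noteq> l'" using that l' by blast
      then have "(sender F1 c = Some l' \<and> recipient F1 c = Some l) \<or> (sender F1 c = Some l \<and> recipient F1 c = Some l')"
        using eq cc l' by auto
      then show ?thesis using c1 l' that unfolding RC_def Ccut0_def chans_def by auto
    qed
  qed
  obtain B1' R1' where A1: "(B1', R1') \<in> exec chan msg F1" and Blc: "Blc = restr chan (B1', R1') LC"
    using assms(4) unfolding lruns_def LC_def by auto
  obtain B2' R2' where A2: "(B2', R2') \<in> exec chan msg F2" and Brc: "Brc = restr chan (B2', R2') RC"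
    using assms(5) unfolding lruns_def RC_def by auto
  define B1 where "B1 = {e\<in>B1'. chan e \<in> LC}"
  define R1 where "R1 = R1' \<inter> B1\<times>B1"
  define B2 where "B2 = {e\<in>B2'. chan e \<in> RC}"
  define R2 where "R2 = R2' \<inter> B2\<times>B2"
  have Blc': "Blc = (B1, R1)" unfolding Blc restr_def B1_def R1_def by simp
  have Brc': "Brc = (B2, R2)" unfolding Brc restr_def B2_def R2_def by simp
  have se1: "sys_events (B1', R1')" using A1 unfolding exec_def by blast
  have se2: "sys_events (B2', R2')" using A2 unfolding exec_def by blast
  have po1: "partial_order_on B1 R1" unfolding R1_def
    using po_restr[of B1' R1' B1] se1 unfolding sys_events_def B1_def by auto
  have po2: "partial_order_on B2 R2" unfolding R2_def
    using po_restr[of B2' R2' B2] se2 unfolding sys_events_def B2_def by auto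
  have fin1: "finite {y. (y,x)\<in>R1}" for x
  proof (cases "x \<in> B1")
    case True
    then have "finite {y. (y,x)\<in>R1'}" using se1 unfolding sys_events_def B1_def by auto
    then show ?thesis by (rule finite_subset[rotated]) (auto simp: R1_def)
  next
    case False then show ?thesis by (simp add: R1_def)
  qed
  have fin2: "finite {y. (y,x)\<in>R2}" for x
  proof (cases "x \<in> B2")
    case True
    then have "finite {y. (y,x)\<in>R2'}" using se2 unfolding sys_events_def B2_def by auto
    then show ?thesis by (rule finite_subset[rotated]) (auto simp: R2_def)
  next
    case False then show ?thesis by (simp add: R2_def)
  qed
  define C where "C = {e\<in>B1. chan e \<in> Cut}"
  have cuteq: "restr chan (B1,R1) Cut = restr chan (B2,R2) Cut"
    using assms(6) Blc' Brc' Cut_def by simp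
  have C2: "C = {e\<in>B2. chan e \<in> Cut}" and RC12: "R1 \<inter> C\<times>C = R2 \<inter> C\<times>C"
    using cuteq unfolding restr_def C_def by auto
  have B1ch: "chan e \<in> LC" if "e \<in> B1" for e using that B1_def by auto
  have B2ch: "chan e \<in> RC" if "e \<in> B2" for e using that B2_def by auto
  have B12: "B1 \<inter> B2 = C" using C2 C_def B1ch B2ch LCRC by blast
  have s1: "R1 \<subseteq> B1\<times>B1" and s2: "R2 \<subseteq> B2\<times>B2" unfolding R1_def R2_def by auto
  have K12: "(x,y)\<in>R1" if "x\<in>B1" "y\<in>B1" "(x,y)\<in>R2" for x y
    using that s2 B12 RC12 by blast
  have K21: "(x,y)\<in>R2" if "x\<in>B2" "y\<in>B2" "(x,y)\<in>R1" for x y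
    using that s1 B12 RC12 by blast
  have B2LC: "e \<in> B1" if "e \<in> B2" "chan e \<in> LC" for e
  proof -
    have "chan e \<in> Cut" using that B2ch LCRC by blast
    then have "e \<in> C" using C2 that by blast
    then show ?thesis using C_def by blast
  qed
  have B1RC: "e \<in> B2" if "e \<in> B1" "chan e \<in> RC" for e
  proof -
    have "chan e \<in> Cut" using that B1ch LCRC by blast
    then have "e \<in> C" using C_def that by blast
    then show ?thesis using C2 by blast
  qed
  define R where "R = R1 \<union> R2 \<union> R1 O R2 \<union> R2 O R1"
  note cb = combine[OF po1 po2 fin1 fin2 K12 K21 R_def]
  have rl: "restr chan (B1\<union>B2, R) LC = (B1, R1)"
  proof -
    have "{e \<in> B1\<union>B2. chan e \<in> LC} = B1" using B1ch B2LC by blast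
    then show ?thesis unfolding restr_def using cb(2) by simp
  qed
  have rr: "restr chan (B1\<union>B2, R) RC = (B2, R2)"
  proof -
    have "{e \<in> B1\<union>B2. chan e \<in> RC} = B2" using B2ch B1RC by blast
    then show ?thesis unfolding restr_def using cb(3) by simp
  qed
  have locs: "total_on (loc_events chan F2 (B1\<union>B2) l) R \<and>
        (\<exists>s\<in>traces F2 l. enumerates chan msg (loc_events chan F2 (B1\<union>B2) l) R s)"
    if l: "l \<in> LO F2" for l
  proof (cases "l \<in> L0")
    case True
    define E where "E = loc_events chan F2 (B1\<union>B2) l"
    have E: "E = loc_events chan F1 B1' l"
      unfolding E_def loc_events_def using sh(2)[OF True] CH1[OF True] B2LC
      by (auto simp: B1_def)
    have EB: "E \<subseteq> B1" unfolding E_def loc_events_def using sh(2)[OF True] CH1[OF True] B2LC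
      by auto
    have RE: "R \<inter> E\<times>E = R1' \<inter> E\<times>E" using cb(2) EB R1_def by blast
    have lo1: "l \<in> LO F1" using sh(1) True by blast
    obtain s where "total_on E R1'" "s \<in> traces F1 l" "enumerates chan msg E R1' s"
      using A1 lo1 unfolding exec_def E by blast
    then show ?thesis using RE total_cong enum_cong sh(4)[OF True] unfolding E_def[symmetric] by metis
  next
    case False
    define E where "E = loc_events chan F2 (B1\<union>B2) l"
    have E: "E = loc_events chan F2 B2' l"
      unfolding E_def loc_events_def using CH2[OF l False] B1RC
      by (auto simp: B2_def)
    have EB: "E \<subseteq> B2" unfolding E_def loc_events_def using CH2[OF l False] B1RC
      by auto
    have RE: "R \<inter> E\<times>E = R2' \<inter> E\<times>E" using cb(3) EB R2_def by blast
    obtain s where "total_on E R2'" "s \<in> traces F2 l" "enumerates chan msg E R2' s"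
      using A2 l unfolding exec_def E by blast
    then show ?thesis using RE total_cong enum_cong unfolding E_def[symmetric] by metis
  qed
  have "(B1\<union>B2, R) \<in> exec chan msg F2"
    unfolding exec_def using cb(1) locs by blast
  then show ?thesis using rl rr Blc' Brc' unfolding LC_def RC_def by (intro bexI[of _ "(B1\<union>B2, R)"]) simp_all
qed

end
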